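(* Let $m,n\ge 1$ and $k\ge 2$ be integers. The linear map $\psi_{m,k}:V_{m,k}\to\mathbb{R}^N$ is an isomorphism of real vector spaces.
   Context: $mB^n=\{0,1,\ldots,m\}^n$. For an integer $k\ge 2$, a polynomial $P\in\mathbb{R}[x_1,\ldots,x_n]$ is called $(m,k)$-reduced if two conditions hold: $\deg P\le mn+(m+1)(k-1)-1$, and no monomial of $P$ is divisible by $x_{i_1}^{m+1}\cdots x_{i_k}^{m+1}$ for any indices $i_1,\ldots,i_k$ (not necessarily distinct). $V_{m,k}$ is the space of all $(m,k)$-reduced polynomials. $M_k(n)=\binom{n+k-1}{n}$ and $N=\big((m+1)^n-1\big)M_k(n)+M_{k-1}(n)$. The map $\psi_{m,k}$ sends $P\in V_{m,k}$ to the $N$-tuple listing, in a fixed order, two groups of values: - the values at every point of $mB^n\setminus\{\mathbf 0\}$ of all partial derivatives $\partial^{j_1+\cdots+j_n}P/\partial x_1^{j_1}\cdots\partial x_n^{j_n}$ with $j_1+\cdots+j_n<k$; - the values at $\mathbf 0$ of all such partial derivatives with $j_1+\cdots+j_n<k-1$. *)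

theory Defs
  imports Complex_Main
begin

text \<open>Multivariate real polynomials in x_0..x_(n-1) are represented by their coefficient
  functions c :: (nat => nat) => real, indexed by exponent vectors alpha (alpha i = 0 for i >= n).\<close>

definition expset :: "nat \<Rightarrow> nat \<Rightarrow> (nat \<Rightarrow> nat) set" where
  "expset n D = {\<alpha>. (\<forall>i\<ge>n. \<alpha> i = 0) \<and> (\<Sum>i<n. \<alpha> i) \<le> D}"

text \<open>x_(i1)^(m+1) ... x_(ik)^(m+1) divides the monomial x^alpha, where t i counts how often
  index i occurs among i1..ik.\<close>
definition mono_divisible :: "nat \<Rightarrow> nat \<Rightarrow> nat \<Rightarrow> (nat \<Rightarrow> nat) \<Rightarrow> bool" where
  "mono_divisible n m k \<alpha> =
     (\<exists>t::nat \<Rightarrow> nat. (\<Sum>i<n. t i) = k \<and> (\<forall>i<n. (m + 1) * t i \<le> \<alpha> i))"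

definition deg_bound :: "nat \<Rightarrow> nat \<Rightarrow> nat \<Rightarrow> nat" where
  "deg_bound n m k = m * n + (m + 1) * (k - 1) - 1"

definition reduced_space :: "nat \<Rightarrow> nat \<Rightarrow> nat \<Rightarrow> ((nat \<Rightarrow> nat) \<Rightarrow> real) set" where
  "reduced_space n m k =
     {c. \<forall>\<alpha>. c \<alpha> \<noteq> 0 \<longrightarrow> \<alpha> \<in> expset n (deg_bound n m k) \<and> \<not> mono_divisible n m k \<alpha>}"

text \<open>Value at x of the partial derivative d^|j| P / dx_0^(j 0) ... dx_(n-1)^(j (n-1)),
  for P with coefficients c supported in expset n D.\<close>
definition deriv_at :: "nat \<Rightarrow> nat \<Rightarrow> ((nat \<Rightarrow> nat) \<Rightarrow> real) \<Rightarrow> (nat \<Rightarrow> nat) \<Rightarrow> (nat \<Rightarrow> real) \<Rightarrow> real" where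
  "deriv_at n D c j x =
     (\<Sum>\<alpha>\<in>expset n D. c \<alpha> * (\<Prod>i<n. real (\<Prod>t<j i. \<alpha> i - t) * x i ^ (\<alpha> i - j i)))"

definition grid_pts :: "nat \<Rightarrow> nat \<Rightarrow> (nat \<Rightarrow> nat) set" where
  "grid_pts n m = {x. (\<forall>i<n. x i \<le> m) \<and> (\<forall>i\<ge>n. x i = 0)}"

definition midx :: "nat \<Rightarrow> nat \<Rightarrow> (nat \<Rightarrow> nat) set" where
  "midx n d = {j. (\<forall>i\<ge>n. j i = 0) \<and> (\<Sum>i<n. j i) < d}"

definition psi_index :: "nat \<Rightarrow> nat \<Rightarrow> nat \<Rightarrow> ((nat \<Rightarrow> nat) \<times> (nat \<Rightarrow> nat)) set" where
  "psi_index n m k =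
     {(x, j). x \<in> grid_pts n m - {(\<lambda>_. 0)} \<and> j \<in> midx n k}
     \<union> {(x, j). x = (\<lambda>_. 0) \<and> j \<in> midx n (k - 1)}"

text \<open>psi_{m,k}: the tuple is a function on psi_index (extended by 0 outside).\<close>
definition psi :: "nat \<Rightarrow> nat \<Rightarrow> nat \<Rightarrow> ((nat \<Rightarrow> nat) \<Rightarrow> real) \<Rightarrow> ((nat \<Rightarrow> nat) \<times> (nat \<Rightarrow> nat)) \<Rightarrow> real" where
  "psi n m k c = (\<lambda>(x, j). if (x, j) \<in> psi_index n m k
       then deriv_at n (deg_bound n m k) c j (\<lambda>i. real (x i)) else 0)"

definition Mk :: "nat \<Rightarrow> nat \<Rightarrow> nat" where
  "Mk k n = (n + k - 1) choose n"

definition bigN :: "nat \<Rightarrow> nat \<Rightarrow> nat \<Rightarrow> nat" where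
  "bigN n m k = ((m + 1) ^ n - 1) * Mk k n + Mk (k - 1) n"

end

theory Submission
  imports Defs "HOL-Computational_Algebra.Polynomial" "HOL-Library.Function_Algebras" "HOL-Library.FuncSet"
begin


lemma ff_Suc: "(\<Prod>t<Suc j. Suc a - t) = Suc a * (\<Prod>t<j. a - t)"
  by (subst prod.lessThan_Suc_shift) simp

lemma ff_zero: "(\<Prod>t<Suc j. (0::nat) - t) = 0"
  by (subst prod.lessThan_Suc_shift) simp

lemma poly_sum_N:
  fixes p :: "real poly"
  assumes "degree p \<le> N"
  shows "poly p y = (\<Sum>a\<le>N. coeff p a * y ^ a)"
proof -
  have "poly p y = (\<Sum>a\<le>degree p. coeff p a * y ^ a)" by (rule poly_altdef)
  also have "\<dots> = (\<Sum>a\<le>N. coeff p a * y ^ a)"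
    by (rule sum.mono_neutral_left) (use assms in \<open>auto simp: coeff_eq_0\<close>)
  finally show ?thesis .
qed

lemma poly_pderiv_iter:
  fixes p :: "real poly"
  assumes "degree p \<le> N"
  shows "poly ((pderiv ^^ j) p) y = (\<Sum>a\<le>N. coeff p a * (real (\<Prod>t<j. a - t) * y ^ (a - j)))"
  using assms
proof (induction j arbitrary: p N)
  case 0
  then show ?case by (simp add: poly_sum_N)
next
  case (Suc j)
  have d: "degree (pderiv p) \<le> N" using Suc.prems by (simp add: degree_pderiv)
  have "poly ((pderiv ^^ Suc j) p) y = poly ((pderiv ^^ j) (pderiv p)) y"
    by (simp add: funpow_Suc_right del: funpow.simps)
  also have "\<dots> = (\<Sum>a\<le>N. coeff (pderiv p) a * (real (\<Prod>t<j. a - t) * y ^ (a - j)))"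
    using Suc.IH[OF d] .
  also have "\<dots> = (\<Sum>a\<le>N. coeff p (Suc a) * (real (\<Prod>t<Suc j. Suc a - t) * y ^ (Suc a - Suc j)))"
    by (intro sum.cong refl) (simp add: coeff_pderiv ff_Suc algebra_simps del: prod.lessThan_Suc of_nat_prod)
  also have "\<dots> = (\<Sum>a\<le>Suc N. coeff p a * (real (\<Prod>t<Suc j. a - t) * y ^ (a - Suc j)))"
    by (subst sum.atMost_Suc_shift) (simp add: ff_zero del: prod.lessThan_Suc)
  also have "\<dots> = (\<Sum>a\<le>N. coeff p a * (real (\<Prod>t<Suc j. a - t) * y ^ (a - Suc j)))"
    using Suc.prems by (simp add: coeff_eq_0 del: prod.lessThan_Suc)
  finally show ?case .
qed

lemma poly_pderiv_root:
  fixes f :: "real poly"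
  assumes "j \<le> q"
  shows "poly ((pderiv ^^ j) ([:- a, 1:] ^ q * f)) a = (if j = q then fact q * poly f a else 0)"
  using assms
proof (induction q arbitrary: j f)
  case 0
  then show ?case by simp
next
  case (Suc q)
  show ?case
  proof (cases j)
    case 0
    then show ?thesis by simp
  next
    case (Suc j')
    have pd: "pderiv ([:- a, 1:] ^ Suc q * f) =
      [:- a, 1:] ^ q * (smult (of_nat (Suc q)) f + [:- a, 1:] * pderiv f)"
    proof -
      have pX: "pderiv [:- a, 1:] = 1" by (simp add: pderiv_pCons)
      show ?thesis unfolding pderiv_mult pderiv_power_Suc pX
        by (simp add: algebra_simps power_Suc smult_add_right)
    qed
    have "poly ((pderiv ^^ j) ([:- a, 1:] ^ Suc q * f)) a =
        poly ((pderiv ^^ j') (pderiv ([:- a, 1:] ^ Suc q * f))) a"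
      using Suc by (simp add: funpow_Suc_right del: funpow.simps)
    also have "\<dots> = (if j' = q then fact q * ((of_nat (Suc q)) * poly f a) else 0)"
      unfolding pd using Suc.IH[of j'] Suc.prems \<open>j = Suc j'\<close> by simp
    also have "\<dots> = (if j = Suc q then fact (Suc q) * poly f a else 0)"
      using \<open>j = Suc j'\<close> by (simp add: algebra_simps)
    finally show ?thesis .
  qed
qed



definition lp :: "nat \<Rightarrow> nat \<Rightarrow> real poly" where
  "lp m c = (\<Prod>t\<in>{..m}-{c}. [:- real t, 1:])"

definition gp :: "nat \<Rightarrow> real poly" where
  "gp m = (\<Prod>t\<in>{..m}. [:- real t, 1:])"

definition Fq :: "nat \<Rightarrow> nat \<Rightarrow> nat \<Rightarrow> real poly" where
  "Fq m q c = gp m ^ q * lp m c"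

lemma gp_split: "b \<le> m \<Longrightarrow> gp m = [:- real b, 1:] * lp m b"
  unfolding gp_def lp_def by (subst prod.remove[of _ b]) auto

lemma Fq_split: "b \<le> m \<Longrightarrow> Fq m q c = [:- real b, 1:] ^ q * (lp m b ^ q * lp m c)"
  unfolding Fq_def by (simp only: gp_split power_mult_distrib mult_ac)

lemma poly_lp_zero: "b \<le> m \<Longrightarrow> b \<noteq> c \<Longrightarrow> poly (lp m c) (real b) = 0"
  unfolding lp_def poly_prod by (rule prod_zero) (auto intro!: bexI[of _ b])

lemma poly_lp_nz: "poly (lp m b) (real b) \<noteq> 0"
  unfolding lp_def poly_prod by (subst prod_zero_iff) auto

lemma lp_nz: "lp m c \<noteq> 0"
  unfolding lp_def by (subst prod_zero_iff) auto

lemma gp_nz: "gp m \<noteq> 0"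
  unfolding gp_def by (subst prod_zero_iff) auto

lemma degree_lp: "c \<le> m \<Longrightarrow> degree (lp m c) = m"
  unfolding lp_def by (subst degree_prod_eq_sum_degree) auto

lemma lead_lp: "lead_coeff (lp m c) = 1"
  unfolding lp_def lead_coeff_prod by simp

lemma degree_gp: "degree (gp m) = Suc m"
  unfolding gp_def by (subst degree_prod_eq_sum_degree) auto

lemma lead_gp: "lead_coeff (gp m) = 1"
  unfolding gp_def lead_coeff_prod by simp

lemma degree_Fq: "c \<le> m \<Longrightarrow> degree (Fq m q c) = Suc m * q + m"
  unfolding Fq_def using lp_nz gp_nz
  by (simp add: degree_mult_eq degree_power_eq degree_gp degree_lp)

lemma lead_Fq: "lead_coeff (Fq m q c) = 1"
  unfolding Fq_def by (simp add: lead_coeff_mult lead_coeff_power lead_gp lead_lp)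

lemma coeff_Fq_top: "c \<le> m \<Longrightarrow> coeff (Fq m q c) (Suc m * q + m) = 1"
  using lead_Fq[of m q c] degree_Fq[of c m q] by simp

lemma coeff_Fq_nz: "c \<le> m \<Longrightarrow> coeff (Fq m q c) a \<noteq> 0 \<Longrightarrow> a \<le> Suc m * q + m"
  using degree_Fq[of c m q] le_degree by fastforce

lemma poly_deriv_Fq:
  assumes "b \<le> m" "c \<le> m" "j \<le> q"
  shows "poly ((pderiv ^^ j) (Fq m q c)) (real b) =
     (if j = q \<and> b = c then fact q * poly (lp m b) (real b) ^ Suc q else 0)"
  unfolding Fq_split[OF assms(1)] using assms
  by (simp add: poly_pderiv_root poly_lp_zero)



definition boxs :: "nat \<Rightarrow> (nat \<Rightarrow> nat set) \<Rightarrow> (nat \<Rightarrow> nat) set" where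
  "boxs n B = {\<alpha>. (\<forall>i\<ge>n. \<alpha> i = 0) \<and> (\<forall>i<n. \<alpha> i \<in> B i)}"

lemma boxs_bij: "bij_betw (\<lambda>\<alpha>. restrict \<alpha> {..<n}) (boxs n B) (PiE {..<n} B)"
proof (rule bij_betwI[where g = "\<lambda>g i. if i < n then g i else 0"])
  show "(\<lambda>\<alpha>. restrict \<alpha> {..<n}) \<in> boxs n B \<rightarrow> PiE {..<n} B"
    by (auto simp: boxs_def)
  show "(\<lambda>g i. if i < n then g i else 0) \<in> PiE {..<n} B \<rightarrow> boxs n B"
    by (auto simp: boxs_def PiE_def Pi_def)
  show "(\<lambda>i. if i < n then restrict x {..<n} i else 0) = x" if "x \<in> boxs n B" for x
    using that by (auto simp: boxs_def fun_eq_iff)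
  show "restrict (\<lambda>i. if i < n then y i else 0) {..<n} = y" if "y \<in> PiE {..<n} B" for y
    using that by (auto simp: PiE_def extensional_def fun_eq_iff)
qed

lemma finite_boxs: "(\<And>i. i < n \<Longrightarrow> finite (B i)) \<Longrightarrow> finite (boxs n B)"
  using bij_betw_finite[OF boxs_bij[of n B]] finite_PiE[of "{..<n}" B] by simp

lemma card_boxs: "(\<And>i. i < n \<Longrightarrow> finite (B i)) \<Longrightarrow> card (boxs n B) = (\<Prod>i<n. card (B i))"
  using bij_betw_same_card[OF boxs_bij[of n B]] by (simp add: card_PiE)

lemma sum_prod_boxs:
  fixes h :: "nat \<Rightarrow> nat \<Rightarrow> real"
  assumes "\<And>i. i < n \<Longrightarrow> finite (B i)"
  shows "(\<Sum>\<alpha>\<in>boxs n B. \<Prod>i<n. h i (\<alpha> i)) = (\<Prod>i<n. \<Sum>a\<in>B i. h i a)"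
proof -
  have "(\<Prod>i<n. \<Sum>a\<in>B i. h i a) = (\<Sum>g\<in>PiE {..<n} B. \<Prod>i<n. h i (g i))"
    by (rule prod_sum_PiE) (use assms in auto)
  also have "\<dots> = (\<Sum>\<alpha>\<in>boxs n B. \<Prod>i<n. h i (restrict \<alpha> {..<n} i))"
    by (rule sum.reindex_bij_betw[OF boxs_bij, symmetric])
  also have "\<dots> = (\<Sum>\<alpha>\<in>boxs n B. \<Prod>i<n. h i (\<alpha> i))"
    by (intro sum.cong prod.cong) auto
  finally show ?thesis by simp
qed

lemma expset_sub: "expset n D \<subseteq> boxs n (\<lambda>_. {..D})"
proof
  fix \<alpha> assume a: "\<alpha> \<in> expset n D"
  have "\<alpha> i \<le> D" if "i < n" for i
  proof -
    have "\<alpha> i \<le> (\<Sum>i<n. \<alpha> i)" by (rule member_le_sum) (use that in auto)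
    then show ?thesis using a by (auto simp: expset_def)
  qed
  then show "\<alpha> \<in> boxs n (\<lambda>_. {..D})" using a by (auto simp: expset_def boxs_def)
qed

lemma finite_expset: "finite (expset n D)"
  by (rule finite_subset[OF expset_sub finite_boxs]) auto

lemma expset_mono: "D1 \<le> D2 \<Longrightarrow> expset n D1 \<subseteq> expset n D2"
  by (auto simp: expset_def)

definition Phi :: "nat \<Rightarrow> (nat \<Rightarrow> nat) \<Rightarrow> (nat \<Rightarrow> real) \<Rightarrow> (nat \<Rightarrow> nat) \<Rightarrow> real" where
  "Phi n j x \<alpha> = (\<Prod>i<n. real (\<Prod>t<j i. \<alpha> i - t) * x i ^ (\<alpha> i - j i))"

lemma deriv_at_Phi: "deriv_at n D c j x = (\<Sum>\<alpha>\<in>expset n D. c \<alpha> * Phi n j x \<alpha>)"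
  by (simp add: deriv_at_def Phi_def)

lemma deriv_at_mono:
  assumes "\<And>\<alpha>. c \<alpha> \<noteq> 0 \<Longrightarrow> \<alpha> \<in> expset n D1" "D1 \<le> D2"
  shows "deriv_at n D1 c j x = deriv_at n D2 c j x"
  unfolding deriv_at_Phi
  by (rule sum.mono_neutral_left) (use assms finite_expset expset_mono in auto)

lemma deriv_at_lin:
  "deriv_at n D (\<lambda>\<alpha>. a * c \<alpha> + b * d \<alpha>) j x = a * deriv_at n D c j x + b * deriv_at n D d j x"
  unfolding deriv_at_Phi by (simp add: sum.distrib sum_distrib_left algebra_simps)

lemma deriv_at_diff:
  "deriv_at n D (\<lambda>\<alpha>. c \<alpha> - d \<alpha>) j x = deriv_at n D c j x - deriv_at n D d j x"
  unfolding deriv_at_Phi by (simp add: sum_subtractf algebra_simps)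

definition sepc :: "nat \<Rightarrow> (nat \<Rightarrow> real poly) \<Rightarrow> (nat \<Rightarrow> nat) \<Rightarrow> real" where
  "sepc n f \<alpha> = (if \<forall>i\<ge>n. \<alpha> i = 0 then \<Prod>i<n. coeff (f i) (\<alpha> i) else 0)"

lemma sepc_supp:
  assumes "sepc n f \<alpha> \<noteq> 0"
  shows "(\<forall>i\<ge>n. \<alpha> i = 0) \<and> (\<forall>i<n. coeff (f i) (\<alpha> i) \<noteq> 0)"
  using assms unfolding sepc_def by (auto split: if_splits)

lemma deriv_sepc:
  assumes "\<And>\<alpha>. sepc n f \<alpha> \<noteq> 0 \<Longrightarrow> \<alpha> \<in> expset n D"
  shows "deriv_at n D (sepc n f) j x = (\<Prod>i<n. poly ((pderiv ^^ j i) (f i)) (x i))"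
proof -
  let ?B = "boxs n (\<lambda>i. {..degree (f i)})"
  have fB: "finite ?B" by (rule finite_boxs) auto
  have sB: "sepc n f \<alpha> \<noteq> 0 \<Longrightarrow> \<alpha> \<in> ?B" for \<alpha>
    using sepc_supp[of n f \<alpha>] by (auto simp: boxs_def le_degree)
  have "deriv_at n D (sepc n f) j x = (\<Sum>\<alpha>\<in>expset n D. sepc n f \<alpha> * Phi n j x \<alpha>)"
    by (rule deriv_at_Phi)
  also have "\<dots> = (\<Sum>\<alpha>\<in>expset n D \<inter> ?B. sepc n f \<alpha> * Phi n j x \<alpha>)"
    by (rule sum.mono_neutral_right) (use finite_expset sB in auto)
  also have "\<dots> = (\<Sum>\<alpha>\<in>?B. sepc n f \<alpha> * Phi n j x \<alpha>)"
    by (rule sum.mono_neutral_left) (use fB assms in auto)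
  also have "\<dots> = (\<Sum>\<alpha>\<in>?B. \<Prod>i<n. coeff (f i) (\<alpha> i) * (real (\<Prod>t<j i. \<alpha> i - t) * x i ^ (\<alpha> i - j i)))"
    by (intro sum.cong refl) (auto simp: sepc_def Phi_def boxs_def prod.distrib)
  also have "\<dots> = (\<Prod>i<n. \<Sum>a\<in>{..degree (f i)}. coeff (f i) a * (real (\<Prod>t<j i. a - t) * x i ^ (a - j i)))"
    by (rule sum_prod_boxs) auto
  also have "\<dots> = (\<Prod>i<n. poly ((pderiv ^^ j i) (f i)) (x i))"
    by (intro prod.cong refl) (rule poly_pderiv_iter[symmetric], simp)
  finally show ?thesis .
qed



definition Ee :: "nat \<Rightarrow> nat \<Rightarrow> (nat \<Rightarrow> nat) \<Rightarrow> (nat \<Rightarrow> nat) \<Rightarrow> (nat \<Rightarrow> nat) \<Rightarrow> real" where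
  "Ee n m q c = sepc n (\<lambda>i. Fq m (q i) (c i))"

definition kap :: "nat \<Rightarrow> nat \<Rightarrow> (nat \<Rightarrow> nat) \<Rightarrow> (nat \<Rightarrow> nat) \<Rightarrow> real" where
  "kap n m q b = (\<Prod>i<n. fact (q i) * poly (lp m (b i)) (real (b i)) ^ Suc (q i))"

lemma kap_nz: "kap n m q b \<noteq> 0"
  unfolding kap_def using poly_lp_nz by (subst prod_zero_iff) auto

lemma Ee_supp:
  assumes "c \<in> grid_pts n m" "Ee n m q c \<alpha> \<noteq> 0"
  shows "(\<forall>i\<ge>n. \<alpha> i = 0) \<and> (\<forall>i<n. \<alpha> i \<le> Suc m * q i + m)"
  using sepc_supp[OF assms(2)[unfolded Ee_def]] assms(1) coeff_Fq_nz
  by (auto simp: grid_pts_def)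

lemma Ee_expset:
  assumes "c \<in> grid_pts n m" "Ee n m q c \<alpha> \<noteq> 0"
  shows "\<alpha> \<in> expset n (Suc m * (\<Sum>i<n. q i) + m * n)"
proof -
  note s = Ee_supp[OF assms]
  have "(\<Sum>i<n. \<alpha> i) \<le> (\<Sum>i<n. Suc m * q i + m)" by (rule sum_mono) (use s in auto)
  also have "\<dots> = Suc m * (\<Sum>i<n. q i) + m * n" by (simp add: sum.distrib sum_distrib_left)
  finally show ?thesis using s by (auto simp: expset_def)
qed

lemma deriv_Ee:
  assumes "c \<in> grid_pts n m"
  shows "deriv_at n (Suc m * (\<Sum>i<n. q i) + m * n) (Ee n m q c) j x =
     (\<Prod>i<n. poly ((pderiv ^^ j i) (Fq m (q i) (c i))) (x i))"
  unfolding Ee_def by (rule deriv_sepc) (use Ee_expset[OF assms] in \<open>auto simp: Ee_def\<close>)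

lemma KE:
  assumes b: "b \<in> grid_pts n m" and c: "c \<in> grid_pts n m"
    and j0: "\<forall>i\<ge>n. j i = 0" and q0: "\<forall>i\<ge>n. q i = 0"
    and le: "(\<Sum>i<n. j i) \<le> (\<Sum>i<n. q i)"
  shows "(\<Prod>i<n. poly ((pderiv ^^ j i) (Fq m (q i) (c i))) (real (b i))) =
     (if j = q \<and> b = c then kap n m q b else 0)"
proof (cases "\<exists>i<n. j i < q i")
  case True
  then obtain i where i: "i < n" "j i < q i" by blast
  have "j \<noteq> q" using i by auto
  moreover have "(\<Prod>i<n. poly ((pderiv ^^ j i) (Fq m (q i) (c i))) (real (b i))) = 0"
    by (rule prod_zero) (use i b c in \<open>auto intro!: bexI[of _ i] simp: grid_pts_def poly_deriv_Fq\<close>)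
  ultimately show ?thesis by simp
next
  case False
  have "\<forall>i<n. j i = q i"
  proof (rule ccontr)
    assume "\<not> (\<forall>i<n. j i = q i)"
    then obtain i where "i < n" "q i < j i" using False by (meson linorder_neqE_nat)
    moreover have H: "\<forall>i<n. q i \<le> j i" using False by (meson not_less)
    ultimately have "(\<Sum>i<n. q i) < (\<Sum>i<n. j i)"
      by (intro sum_strict_mono_ex1) auto
    then show False using le by simp
  qed
  then have jq: "j = q" using j0 q0 by (metis ext not_le)
  have fac: "poly ((pderiv ^^ j i) (Fq m (q i) (c i))) (real (b i)) =
      (if b i = c i then fact (q i) * poly (lp m (b i)) (real (b i)) ^ Suc (q i) else 0)" if "i < n" for i
    using that b c jq by (auto simp: grid_pts_def poly_deriv_Fq)
  show ?thesis
  proof (cases "b = c")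
    case True
    then show ?thesis using fac jq by (simp add: kap_def)
  next
    case False
    then obtain i where i: "b i \<noteq> c i" by auto
    then have "i < n" using b c unfolding grid_pts_def by (metis (mono_tags) mem_Collect_eq not_le)
    then have "(\<Prod>i<n. poly ((pderiv ^^ j i) (Fq m (q i) (c i))) (real (b i))) = 0"
      using i fac by (intro prod_zero) (auto intro!: bexI[of _ i])
    then show ?thesis using False by simp
  qed
qed

lemma ND:
  assumes "\<forall>i<n. \<alpha> i \<le> Suc m * q i + m" "(\<Sum>i<n. q i) < k"
  shows "\<not> mono_divisible n m k \<alpha>"
proof
  assume "mono_divisible n m k \<alpha>"
  then obtain t where t: "(\<Sum>i<n. t i) = k" "\<forall>i<n. (m + 1) * t i \<le> \<alpha> i"
    by (auto simp: mono_divisible_def)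
  have "t i \<le> q i" if "i < n" for i
  proof (rule ccontr)
    assume "\<not> t i \<le> q i"
    then have "Suc m * Suc (q i) \<le> Suc m * t i" by (intro mult_le_mono2) simp
    then show False using t(2) assms(1) that by (simp add: algebra_simps) (metis add_le_mono1 le_trans not_less_eq_eq)
  qed
  then have "(\<Sum>i<n. t i) \<le> (\<Sum>i<n. q i)" by (intro sum_mono) auto
  then show False using t assms by simp
qed

lemma zero_grid: "(\<lambda>_. 0) \<in> grid_pts n m"
  by (simp add: grid_pts_def)

lemma M1:
  assumes k: "k \<ge> 2" and q0: "\<forall>i\<ge>n. q i = 0" and qs: "(\<Sum>i<n. q i) + 2 \<le> k"
    and c: "c \<in> grid_pts n m"
  shows "Ee n m q c \<in> reduced_space n m k"
proof -
  have le: "Suc m * (\<Sum>i<n. q i) + m * n \<le> deg_bound n m k"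
  proof -
    have "Suc m * (\<Sum>i<n. q i) + Suc m \<le> Suc m * (k - 1)"
      using qs mult_le_mono2[of "(\<Sum>i<n. q i) + 1" "k - 1" "Suc m"] by (simp add: algebra_simps)
    then show ?thesis unfolding deg_bound_def by simp
  qed
  show ?thesis unfolding reduced_space_def
  proof (intro CollectI allI impI conjI)
    fix \<alpha> assume a: "Ee n m q c \<alpha> \<noteq> 0"
    show "\<alpha> \<in> expset n (deg_bound n m k)"
      using Ee_expset[OF c a] expset_mono[OF le] by auto
    show "\<not> mono_divisible n m k \<alpha>"
      by (rule ND) (use Ee_supp[OF c a] qs in auto)
  qed
qed

lemma Ee_top:
  assumes c: "c \<in> grid_pts n m" and "\<forall>i<n. \<alpha> i = Suc m * q i + m" "\<forall>i\<ge>n. \<alpha> i = 0"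
  shows "Ee n m q c \<alpha> = 1"
  using assms coeff_Fq_top by (auto simp: Ee_def sepc_def grid_pts_def)

lemma M2:
  assumes k: "k \<ge> 2" and q0: "\<forall>i\<ge>n. q i = 0" and qs: "(\<Sum>i<n. q i) + 1 = k"
    and c: "c \<in> grid_pts n m"
  shows "(\<lambda>\<alpha>. Ee n m q c \<alpha> - Ee n m q (\<lambda>_. 0) \<alpha>) \<in> reduced_space n m k"
  unfolding reduced_space_def
proof (intro CollectI allI impI conjI)
  fix \<alpha> assume a: "Ee n m q c \<alpha> - Ee n m q (\<lambda>_. 0) \<alpha> \<noteq> 0"
  have s: "(\<forall>i\<ge>n. \<alpha> i = 0) \<and> (\<forall>i<n. \<alpha> i \<le> Suc m * q i + m)"
  proof (cases "Ee n m q c \<alpha> = 0")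
    case True
    then have "Ee n m q (\<lambda>_. 0) \<alpha> \<noteq> 0" using a by simp
    then show ?thesis using Ee_supp[OF zero_grid] by blast
  next
    case False
    then show ?thesis using Ee_supp[OF c] by blast
  qed
  have "\<exists>i<n. \<alpha> i < Suc m * q i + m"
  proof (rule ccontr)
    assume "\<not> ?thesis"
    then have "\<forall>i<n. \<alpha> i = Suc m * q i + m" using s by (meson le_neq_implies_less)
    then show False using a Ee_top[OF c _ ] Ee_top[OF zero_grid] s by simp
  qed
  then have "(\<Sum>i<n. \<alpha> i) < (\<Sum>i<n. Suc m * q i + m)"
    using s by (intro sum_strict_mono_ex1) auto
  also have "\<dots> = Suc m * (\<Sum>i<n. q i) + m * n" by (simp add: sum.distrib sum_distrib_left)
  moreover have "deg_bound n m k = m * n + Suc m * (\<Sum>i<n. q i) - 1"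
    unfolding deg_bound_def qs[symmetric] by simp
  ultimately have "(\<Sum>i<n. \<alpha> i) \<le> deg_bound n m k" by linarith
  then show "\<alpha> \<in> expset n (deg_bound n m k)" using s by (simp add: expset_def)
  show "\<not> mono_divisible n m k \<alpha>"
    by (rule ND) (use s qs in auto)
qed



instantiation "fun" :: (type, real_vector) real_vector
begin
definition scaleR_fun :: "real \<Rightarrow> ('a \<Rightarrow> 'b) \<Rightarrow> 'a \<Rightarrow> 'b" where
  "scaleR_fun r f = (\<lambda>x. r *\<^sub>R f x)"
instance by standard (auto simp: scaleR_fun_def fun_eq_iff algebra_simps)
end

lemma sum_fun_apply: "(\<Sum>x\<in>A. g x) y = (\<Sum>x\<in>A. g x y)"
  by (induction A rule: infinite_finite_induct) auto

definition dl :: "'a \<Rightarrow> 'a \<Rightarrow> real" where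
  "dl p = (\<lambda>p'. if p' = p then 1 else 0)"

lemma fun_decomp:
  fixes f :: "'a \<Rightarrow> real"
  assumes "finite A" "\<And>p. p \<notin> A \<Longrightarrow> f p = 0"
  shows "f = (\<Sum>p\<in>A. f p *\<^sub>R dl p)"
proof
  fix x
  show "f x = (\<Sum>p\<in>A. f p *\<^sub>R dl p) x"
    unfolding sum_fun_apply using assms
    by (cases "x \<in> A") (auto simp: scaleR_fun_def dl_def if_distrib sum.delta cong: if_cong)
qed

lemma T_mem:
  assumes "k \<ge> 1"
  shows "(b, j) \<in> psi_index n m k \<longleftrightarrow>
     b \<in> grid_pts n m \<and> (\<forall>i\<ge>n. j i = 0) \<and> (\<Sum>i<n. j i) < k \<and>
     (b = (\<lambda>_. 0) \<longrightarrow> (\<Sum>i<n. j i) + 1 < k)"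
  using assms by (auto simp: psi_index_def midx_def zero_grid)

lemma psi_in: "p \<in> psi_index n m k \<Longrightarrow>
   psi n m k c p = deriv_at n (deg_bound n m k) c (snd p) (\<lambda>i. real (fst p i))"
  by (cases p) (simp add: psi_def)

lemma psi_out: "p \<notin> psi_index n m k \<Longrightarrow> psi n m k c p = 0"
  by (cases p) (simp add: psi_def)

lemma psi_lin:
  "psi n m k (\<lambda>\<alpha>. a * c \<alpha> + b * d \<alpha>) = (\<lambda>p. a * psi n m k c p + b * psi n m k d p)"
  by (rule ext, case_tac p) (simp add: psi_def deriv_at_lin)

lemma linear_psi: "linear (psi n m k)"
proof (rule linearI)
  fix x y :: "(nat \<Rightarrow> nat) \<Rightarrow> real"
  show "psi n m k (x + y) = psi n m k x + psi n m k y"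
    using psi_lin[of n m k 1 x 1 y] by (simp add: plus_fun_def)
next
  fix r and x :: "(nat \<Rightarrow> nat) \<Rightarrow> real"
  show "psi n m k (r *\<^sub>R x) = r *\<^sub>R psi n m k x"
    using psi_lin[of n m k r x 0 x] by (simp add: scaleR_fun_def)
qed

lemma subspace_V: "subspace (reduced_space n m k)"
  unfolding subspace_def reduced_space_def
  apply (auto simp: plus_fun_def scaleR_fun_def)
   apply (metis add.right_neutral)+
  done

lemma Dq_le:
  assumes "(\<Sum>i<n. q i) + 2 \<le> k"
  shows "Suc m * (\<Sum>i<n. q i) + m * n \<le> deg_bound n m k"
proof -
  have "Suc m * (\<Sum>i<n. q i) + Suc m \<le> Suc m * (k - 1)"
    using assms mult_le_mono2[of "(\<Sum>i<n. q i) + 1" "k - 1" "Suc m"] by (simp add: algebra_simps)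
  then show ?thesis unfolding deg_bound_def by simp
qed

lemma psi_E1:
  assumes k: "k \<ge> 2" and q0: "\<forall>i\<ge>n. q i = 0" and qs: "(\<Sum>i<n. q i) + 2 \<le> k"
    and c: "c \<in> grid_pts n m" and p: "(b, j) \<in> psi_index n m k"
    and le: "(\<Sum>i<n. j i) \<le> (\<Sum>i<n. q i)"
  shows "psi n m k (Ee n m q c) (b, j) = (if j = q \<and> b = c then kap n m q b else 0)"
proof -
  have pm: "b \<in> grid_pts n m" "\<forall>i\<ge>n. j i = 0" using T_mem[of k b j n m] k p by auto
  have "psi n m k (Ee n m q c) (b, j) = deriv_at n (deg_bound n m k) (Ee n m q c) j (\<lambda>i. real (b i))"
    using psi_in[OF p] by simp
  also have "\<dots> = deriv_at n (Suc m * (\<Sum>i<n. q i) + m * n) (Ee n m q c) j (\<lambda>i. real (b i))"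
    by (rule deriv_at_mono[symmetric]) (use Ee_expset[OF c] Dq_le[OF qs] in auto)
  also have "\<dots> = (if j = q \<and> b = c then kap n m q b else 0)"
    unfolding deriv_Ee[OF c] by (rule KE) (use pm c q0 le in auto)
  finally show ?thesis .
qed

lemma psi_E2:
  assumes k: "k \<ge> 2" and q0: "\<forall>i\<ge>n. q i = 0" and qs: "(\<Sum>i<n. q i) + 1 = k"
    and c: "c \<in> grid_pts n m" and p: "(b, j) \<in> psi_index n m k"
  shows "psi n m k (\<lambda>\<alpha>. Ee n m q c \<alpha> - Ee n m q (\<lambda>_. 0) \<alpha>) (b, j) =
     (if j = q \<and> b = c then kap n m q b else 0)"
proof -
  have pm: "b \<in> grid_pts n m" "\<forall>i\<ge>n. j i = 0" "(\<Sum>i<n. j i) < k"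
     "b = (\<lambda>_. 0) \<longrightarrow> (\<Sum>i<n. j i) + 1 < k"
    using T_mem[of k b j n m] k p by auto
  have Deq: "Suc m * (\<Sum>i<n. q i) + m * n = Suc (deg_bound n m k)"
  proof -
    obtain s where s: "(\<Sum>i<n. q i) = Suc s" using k qs by (cases "\<Sum>i<n. q i") auto
    have "k = Suc (Suc s)" using qs s by simp
    then show ?thesis unfolding deg_bound_def s by simp
  qed
  have "psi n m k (\<lambda>\<alpha>. Ee n m q c \<alpha> - Ee n m q (\<lambda>_. 0) \<alpha>) (b, j) =
      deriv_at n (deg_bound n m k) (\<lambda>\<alpha>. Ee n m q c \<alpha> - Ee n m q (\<lambda>_. 0) \<alpha>) j (\<lambda>i. real (b i))"
    using psi_in[OF p] by simp
  also have "\<dots> = deriv_at n (Suc m * (\<Sum>i<n. q i) + m * n)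
      (\<lambda>\<alpha>. Ee n m q c \<alpha> - Ee n m q (\<lambda>_. 0) \<alpha>) j (\<lambda>i. real (b i))"
    by (rule deriv_at_mono) (use M2[OF k q0 qs c] Deq in \<open>auto simp: reduced_space_def\<close>)
  also have "\<dots> = (if j = q \<and> b = c then kap n m q b else 0) -
      (if j = q \<and> b = (\<lambda>_. 0) then kap n m q b else 0)"
  proof -
    have le: "(\<Sum>i<n. j i) \<le> (\<Sum>i<n. q i)" using pm qs by simp
    note K1 = KE[OF pm(1) c pm(2) q0 le]
    note K0 = KE[OF pm(1) zero_grid pm(2) q0 le]
    show ?thesis unfolding deriv_at_diff deriv_Ee[OF c] deriv_Ee[OF zero_grid] K1 K0 ..
  qed
  also have "\<dots> = (if j = q \<and> b = c then kap n m q b else 0)"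
    using pm qs by auto
  finally show ?thesis .
qed



lemma finite_grid: "finite (grid_pts n m)"
proof -
  have "grid_pts n m = boxs n (\<lambda>_. {..m})" by (auto simp: grid_pts_def boxs_def)
  then show ?thesis using finite_boxs[of n "\<lambda>_. {..m}"] by simp
qed

lemma midx_sub: "midx n d \<subseteq> boxs n (\<lambda>_. {..d})"
proof
  fix j assume a: "j \<in> midx n d"
  have "j i \<le> d" if "i < n" for i
  proof -
    have "j i \<le> (\<Sum>i<n. j i)" by (rule member_le_sum) (use that in auto)
    then show ?thesis using a by (auto simp: midx_def)
  qed
  then show "j \<in> boxs n (\<lambda>_. {..d})" using a by (auto simp: midx_def boxs_def)
qed

lemma finite_midx: "finite (midx n d)"
  by (rule finite_subset[OF midx_sub finite_boxs]) auto

lemma finite_T: "finite (psi_index n m k)"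
proof -
  have "psi_index n m k \<subseteq> grid_pts n m \<times> (midx n k \<union> midx n (k - 1))"
    by (auto simp: psi_index_def zero_grid)
  then show ?thesis
    by (rule finite_subset) (use finite_grid finite_midx in auto)
qed

lemma subspace_Im: "subspace (psi n m k ` reduced_space n m k)"
  by (rule real_vector.linear_subspace_image[OF linear_psi subspace_V])

lemma surj_aux:
  assumes k: "k \<ge> 2"
  shows "\<forall>b j. (b, j) \<in> psi_index n m k \<longrightarrow> k - 1 \<le> (\<Sum>i<n. j i) + d \<longrightarrow>
           dl (b, j) \<in> psi n m k ` reduced_space n m k"
proof (induction d)
  let ?T = "psi_index n m k" and ?Im = "psi n m k ` reduced_space n m k"
  have key: "dl (b, j) \<in> ?Im" if p: "(b, j) \<in> ?T" and
    IH: "\<And>b' j'. (b', j') \<in> ?T \<Longrightarrow> (\<Sum>i<n. j i) < (\<Sum>i<n. j' i) \<Longrightarrow> dl (b', j') \<in> ?Im"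
    for b j
  proof -
    have pm: "b \<in> grid_pts n m" "\<forall>i\<ge>n. j i = 0" "(\<Sum>i<n. j i) < k"
       "b = (\<lambda>_. 0) \<longrightarrow> (\<Sum>i<n. j i) + 1 < k"
      using T_mem[of k b j n m] k p by auto
    have kz: "kap n m j b \<noteq> 0" by (rule kap_nz)
    show ?thesis
    proof (cases "(\<Sum>i<n. j i) + 1 = k")
      case True
      let ?e = "\<lambda>\<alpha>. Ee n m j b \<alpha> - Ee n m j (\<lambda>_. 0) \<alpha>"
      have eV: "?e \<in> reduced_space n m k" by (rule M2) (use k pm True in auto)
      have "psi n m k ?e = kap n m j b *\<^sub>R dl (b, j)"
      proof
        fix p show "psi n m k ?e p = (kap n m j b *\<^sub>R dl (b, j)) p"
        proof (cases "p \<in> ?T")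
          case True
          then show ?thesis using psi_E2[OF k pm(2) \<open>(\<Sum>i<n. j i) + 1 = k\<close> pm(1)]
            by (cases p) (auto simp: scaleR_fun_def dl_def)
        next
          case False
          then show ?thesis using p by (auto simp: psi_out scaleR_fun_def dl_def)
        qed
      qed
      then have "dl (b, j) = (1 / kap n m j b) *\<^sub>R psi n m k ?e" using kz by simp
      moreover have "psi n m k ?e \<in> ?Im" using eV by blast
      ultimately show ?thesis using subspace_Im by (metis subspace_scale)
    next
      case False
      then have qs: "(\<Sum>i<n. j i) + 2 \<le> k" using pm by simp
      let ?e = "Ee n m j b"
      have eV: "?e \<in> reduced_space n m k" by (rule M1) (use k pm qs in auto)
      have dec: "psi n m k ?e = (\<Sum>p\<in>?T. psi n m k ?e p *\<^sub>R dl p)"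
        by (rule fun_decomp) (use finite_T psi_out in auto)
      also have "\<dots> = psi n m k ?e (b, j) *\<^sub>R dl (b, j) +
          (\<Sum>p\<in>?T - {(b, j)}. psi n m k ?e p *\<^sub>R dl p)"
        by (rule sum.remove) (use finite_T p in auto)
      finally have eq0: "psi n m k ?e = psi n m k ?e (b, j) *\<^sub>R dl (b, j) +
          (\<Sum>p\<in>?T - {(b, j)}. psi n m k ?e p *\<^sub>R dl p)" .
      define R where "R = (\<Sum>p\<in>?T - {(b, j)}. psi n m k ?e p *\<^sub>R dl p)"
      have eq: "psi n m k ?e = kap n m j b *\<^sub>R dl (b, j) + R"
        using eq0 psi_E1[OF k pm(2) qs pm(1) p] unfolding R_def by simp
      have R: "R \<in> ?Im" unfolding R_def
      proof (rule subspace_sum[OF subspace_Im])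
        fix p assume pT: "p \<in> ?T - {(b, j)}"
        obtain b' j' where pe: "p = (b', j')" by (cases p)
        show "psi n m k ?e p *\<^sub>R dl p \<in> ?Im"
        proof (cases "(\<Sum>i<n. j' i) \<le> (\<Sum>i<n. j i)")
          case True
          have "psi n m k ?e p = 0"
            using psi_E1[OF k pm(2) qs pm(1), of b' j'] pT pe True by auto
          then show ?thesis using subspace_0[OF subspace_Im] by simp
        next
          case False
          then have "dl p \<in> ?Im" using IH[of b' j'] pT pe by auto
          then show ?thesis using subspace_Im by (metis subspace_scale)
        qed
      qed
      have "dl (b, j) = (1 / kap n m j b) *\<^sub>R (psi n m k ?e - R)"
        unfolding eq using kz by simp
      moreover have "psi n m k ?e \<in> ?Im" using eV by blast
      ultimately show ?thesis using subspace_Im R by (metis subspace_scale subspace_diff)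
    qed
  qed
  {
    case 0
    show ?case
    proof (intro allI impI)
      fix b j assume p: "(b, j) \<in> ?T" and le: "k - 1 \<le> (\<Sum>i<n. j i) + 0"
      show "dl (b, j) \<in> ?Im"
      proof (rule key[OF p])
        fix b' j' assume "(b', j') \<in> ?T" "(\<Sum>i<n. j i) < (\<Sum>i<n. j' i)"
        then have False using T_mem[of k b' j' n m] k le by auto
        then show "dl (b', j') \<in> ?Im" ..
      qed
    qed
  next
    case (Suc d)
    show ?case
    proof (intro allI impI)
      fix b j assume p: "(b, j) \<in> ?T" and le: "k - 1 \<le> (\<Sum>i<n. j i) + Suc d"
      show "dl (b, j) \<in> ?Im"
      proof (rule key[OF p])
        fix b' j' assume "(b', j') \<in> ?T" "(\<Sum>i<n. j i) < (\<Sum>i<n. j' i)"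
        then show "dl (b', j') \<in> ?Im" using Suc.IH le by auto
      qed
    qed
  }
qed

lemma surj_psi:
  assumes k: "k \<ge> 2"
  shows "{f. \<forall>p. p \<notin> psi_index n m k \<longrightarrow> f p = 0} \<subseteq> psi n m k ` reduced_space n m k"
proof
  fix f :: "(nat \<Rightarrow> nat) \<times> (nat \<Rightarrow> nat) \<Rightarrow> real"
  assume "f \<in> {f. \<forall>p. p \<notin> psi_index n m k \<longrightarrow> f p = 0}"
  then have f: "f = (\<Sum>p\<in>psi_index n m k. f p *\<^sub>R dl p)"
    by (intro fun_decomp finite_T) auto
  have "(\<Sum>p\<in>psi_index n m k. f p *\<^sub>R dl p) \<in> psi n m k ` reduced_space n m k"
  proof (rule subspace_sum[OF subspace_Im])
    fix p assume p: "p \<in> psi_index n m k"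
    obtain b j where pe: "p = (b, j)" by (cases p)
    have "dl p \<in> psi n m k ` reduced_space n m k"
      using surj_aux[OF k, of n m "k"] p pe by auto
    then show "f p *\<^sub>R dl p \<in> psi n m k ` reduced_space n m k"
      using subspace_Im by (metis subspace_scale)
  qed
  then show "f \<in> psi n m k ` reduced_space n m k" using f by simp
qed



lemma sum_upd_out: "(\<Sum>i<n. (f(n := x)) i) = (\<Sum>i<(n::nat). (f i :: nat))"
  by (rule sum.cong[OF refl]) simp

lemma subsum:
  fixes q :: "nat \<Rightarrow> nat"
  assumes "k \<le> (\<Sum>i<n. q i)"
  shows "\<exists>t. (\<Sum>i<n. t i) = k \<and> (\<forall>i<n. t i \<le> q i)"
  using assms
proof (induction n arbitrary: k)
  case 0
  then show ?case by auto
next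
  case (Suc n)
  show ?case
  proof (cases "k \<le> (\<Sum>i<n. q i)")
    case True
    then obtain t where t: "(\<Sum>i<n. t i) = k" "\<forall>i<n. t i \<le> q i" using Suc.IH by blast
    let ?t = "t(n := 0)"
    have s: "(\<Sum>i<Suc n. ?t i) = k" using t(1) by (simp add: sum_upd_out)
    have "\<forall>i<Suc n. ?t i \<le> q i"
    proof (intro allI impI)
      fix i assume "i < Suc n"
      then show "?t i \<le> q i" using t(2) by (cases "i = n") auto
    qed
    then show ?thesis using s by blast
  next
    case False
    let ?t = "q(n := k - (\<Sum>i<n. q i))"
    have "(\<Sum>i<Suc n. ?t i) = (\<Sum>i<n. q i) + (k - (\<Sum>i<n. q i))" by (simp add: sum_upd_out)
    also have "\<dots> = k" using False by simp
    finally have s: "(\<Sum>i<Suc n. ?t i) = k" .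
    have "\<forall>i<Suc n. ?t i \<le> q i"
    proof (intro allI impI)
      fix i assume "i < Suc n"
      then show "?t i \<le> q i" using Suc.prems by (cases "i = n") auto
    qed
    then show ?thesis using s by blast
  qed
qed

definition Sset :: "nat \<Rightarrow> nat \<Rightarrow> nat \<Rightarrow> (nat \<Rightarrow> nat) set" where
  "Sset n m k = {\<alpha>. \<alpha> \<in> expset n (deg_bound n m k) \<and> \<not> mono_divisible n m k \<alpha>}"

definition hmap :: "nat \<Rightarrow> nat \<Rightarrow> (nat \<Rightarrow> nat) \<Rightarrow> (nat \<Rightarrow> nat) \<times> (nat \<Rightarrow> nat)" where
  "hmap n m \<alpha> = ((\<lambda>i. if i < n then m - \<alpha> i mod Suc m else 0), (\<lambda>i. if i < n then \<alpha> i div Suc m else 0))"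

lemma finite_Sset: "finite (Sset n m k)"
  by (rule finite_subset[OF _ finite_expset]) (auto simp: Sset_def)

lemma hmap_T:
  assumes k: "k \<ge> 2" and a: "\<alpha> \<in> Sset n m k"
  shows "hmap n m \<alpha> \<in> psi_index n m k"
proof -
  let ?b = "\<lambda>i. if i < n then m - \<alpha> i mod Suc m else 0"
  let ?j = "\<lambda>i. if i < n then \<alpha> i div Suc m else 0"
  have ae: "\<alpha> \<in> expset n (deg_bound n m k)" and nd: "\<not> mono_divisible n m k \<alpha>"
    using a by (auto simp: Sset_def)
  have sj: "(\<Sum>i<n. ?j i) = (\<Sum>i<n. \<alpha> i div Suc m)" by simp
  have lt: "(\<Sum>i<n. ?j i) < k"
  proof (rule ccontr)
    assume "\<not> ?thesis"
    then obtain t where t: "(\<Sum>i<n. t i) = k" "\<forall>i<n. t i \<le> ?j i"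
      using subsum[where k=k and n=n and q="?j"] by auto
    have "(m + 1) * t i \<le> \<alpha> i" if "i < n" for i
    proof -
      have "(m + 1) * t i \<le> (m + 1) * (\<alpha> i div Suc m)" using t(2) that by (intro mult_le_mono2) simp
      also have "\<dots> \<le> \<alpha> i" using div_mult_mod_eq[of "\<alpha> i" "Suc m"]
        by (metis Suc_eq_plus1 le_add1 mult.commute)
      finally show ?thesis .
    qed
    then have "mono_divisible n m k \<alpha>" using t(1) by (auto simp: mono_divisible_def)
    then show False using nd by simp
  qed
  have z: "(\<Sum>i<n. ?j i) + 1 < k" if b0: "?b = (\<lambda>_. 0)"
  proof -
    have "\<alpha> i = Suc m * ?j i + m" if "i < n" for i
    proof -
      have "m - \<alpha> i mod Suc m = 0" using fun_cong[OF b0, of i] that by simp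
      moreover have "\<alpha> i mod Suc m \<le> m" using mod_less_divisor[of "Suc m" "\<alpha> i"] by linarith
      ultimately have "\<alpha> i mod Suc m = m" by simp
      then show ?thesis using that div_mult_mod_eq[of "\<alpha> i" "Suc m"] by (simp add: algebra_simps)
    qed
    then have "(\<Sum>i<n. \<alpha> i) = (\<Sum>i<n. Suc m * ?j i + m)" by (intro sum.cong) auto
    also have "\<dots> = Suc m * (\<Sum>i<n. ?j i) + m * n" by (simp add: sum.distrib sum_distrib_left)
    finally have "Suc m * (\<Sum>i<n. ?j i) + m * n \<le> m * n + Suc m * (k - 1) - 1"
      using ae by (simp add: expset_def deg_bound_def)
    then have "Suc m * (\<Sum>i<n. ?j i) < Suc m * (k - 1)" using k by simp
    then have "(\<Sum>i<n. ?j i) < k - 1" using mult_less_cancel1[of "Suc m"] by blast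
    then show ?thesis by simp
  qed
  show ?thesis unfolding hmap_def
    using T_mem[of k ?b ?j n m] k lt z by (auto simp: grid_pts_def)
qed

lemma hmap_inj: "inj_on (hmap n m) (Sset n m k)"
proof (rule inj_onI)
  fix \<alpha> \<beta> assume a: "\<alpha> \<in> Sset n m k" and b: "\<beta> \<in> Sset n m k" and e: "hmap n m \<alpha> = hmap n m \<beta>"
  show "\<alpha> = \<beta>"
  proof
    fix i
    show "\<alpha> i = \<beta> i"
    proof (cases "i < n")
      case True
      have "snd (hmap n m \<alpha>) i = snd (hmap n m \<beta>) i" using e by simp
      then have d: "\<alpha> i div Suc m = \<beta> i div Suc m" using True by (simp add: hmap_def)
      have "fst (hmap n m \<alpha>) i = fst (hmap n m \<beta>) i" using e by simp
      then have "m - \<alpha> i mod Suc m = m - \<beta> i mod Suc m" using True by (simp add: hmap_def)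
      moreover have "\<alpha> i mod Suc m \<le> m" "\<beta> i mod Suc m \<le> m"
        using mod_less_divisor[of "Suc m"] by (metis less_Suc_eq_le zero_less_Suc)+
      ultimately have "\<alpha> i mod Suc m = \<beta> i mod Suc m" by arith
      then show ?thesis using d by (metis div_mult_mod_eq)
    next
      case False
      then show ?thesis using a b by (auto simp: Sset_def expset_def)
    qed
  qed
qed

lemma card_S_le: "k \<ge> 2 \<Longrightarrow> card (Sset n m k) \<le> card (psi_index n m k)"
  by (rule card_inj_on_le[OF hmap_inj]) (auto intro: hmap_T finite_T)

lemma dl_inj: "inj dl"
proof (rule injI)
  fix p q :: 'a assume "dl p = dl q"
  then have "dl p p = dl q p" by simp
  then show "p = q" by (simp add: dl_def split: if_splits)
qed

lemma indep_dl:
  assumes "finite A"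
  shows "independent (dl ` A)"
proof
  assume "dependent (dl ` A)"
  then obtain u where u: "\<exists>v\<in>dl ` A. u v \<noteq> 0" "(\<Sum>v\<in>dl ` A. u v *\<^sub>R v) = 0"
    using real_vector.dependent_finite[of "dl ` A"] assms by auto
  then obtain p0 where p0: "p0 \<in> A" "u (dl p0) \<noteq> 0" by auto
  have "0 = (\<Sum>v\<in>dl ` A. u v *\<^sub>R v) p0" using u(2) by simp
  also have "\<dots> = (\<Sum>p\<in>A. u (dl p) * dl p p0)"
    unfolding sum_fun_apply
    by (subst sum.reindex) (auto intro: inj_on_subset[OF dl_inj] simp: scaleR_fun_def)
  also have "\<dots> = u (dl p0)"
    using p0 assms by (simp add: dl_def if_distrib sum.delta' cong: if_cong)
  finally show False using p0 by simp
qed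

lemma V_span: "reduced_space n m k \<subseteq> span (dl ` Sset n m k)"
proof
  fix c assume c: "c \<in> reduced_space n m k"
  have "c = (\<Sum>\<alpha>\<in>Sset n m k. c \<alpha> *\<^sub>R dl \<alpha>)"
    by (rule fun_decomp[OF finite_Sset]) (use c in \<open>auto simp: Sset_def reduced_space_def\<close>)
  also have "\<dots> \<in> span (dl ` Sset n m k)"
    by (intro real_vector.span_sum real_vector.span_scale real_vector.span_base) auto
  finally show "c \<in> span (dl ` Sset n m k)" .
qed

lemma inj_psi:
  assumes k: "k \<ge> 2"
  shows "inj_on (psi n m k) (reduced_space n m k)"
proof -
  let ?V = "reduced_space n m k" and ?T = "psi_index n m k" and ?f = "psi n m k"
  have "\<forall>c\<in>?V. ?f c = 0 \<longrightarrow> c = 0"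
  proof (intro ballI impI, rule ccontr)
    fix c assume c: "c \<in> ?V" "?f c = 0" "c \<noteq> 0"
    have "independent {c}" using c(3)
      by (simp add: real_vector.independent_insert real_vector.independent_empty)
    then obtain B where B: "{c} \<subseteq> B" "B \<subseteq> ?V" "independent B" "?V \<subseteq> span B"
      using real_vector.maximal_independent_subset_extend[of "{c}" ?V] c(1) by blast
    have fin: "finite (dl ` Sset n m k)" using finite_Sset by simp
    have "finite B \<and> card B \<le> card (dl ` Sset n m k)"
      by (rule real_vector.independent_span_bound[OF fin B(3)]) (use B(2) V_span in blast)
    moreover have "card (dl ` Sset n m k) \<le> card (Sset n m k)" by (rule card_image_le[OF finite_Sset])
    ultimately have fB: "finite B" and cB: "card B \<le> card ?T"
      using card_S_le[OF k, of n m] by auto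
    have "dl ` ?T \<subseteq> ?f ` ?V"
      using surj_psi[OF k, of n m] by (auto simp: dl_def)
    also have "\<dots> \<subseteq> ?f ` span B" using B(4) by auto
    also have "\<dots> = span (?f ` B)" by (rule real_vector.linear_span_image[OF linear_psi, symmetric])
    also have "\<dots> \<subseteq> span (insert 0 (?f ` (B - {c})))"
      by (rule real_vector.span_mono) (use c(2) in auto)
    also have "\<dots> = span (?f ` (B - {c}))" by simp
    finally have sub: "dl ` ?T \<subseteq> span (?f ` (B - {c}))" .
    have "card (dl ` ?T) \<le> card (?f ` (B - {c}))"
      using real_vector.independent_span_bound[OF _ indep_dl[OF finite_T] sub] fB by auto
    also have "\<dots> \<le> card (B - {c})" by (rule card_image_le) (use fB in auto)
    also have "\<dots> = card B - 1" using B(1) fB by simp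
    finally have le1: "card ?T \<le> card B - 1"
      using card_image[OF inj_on_subset[OF dl_inj]] by (metis subset_UNIV)
    have "B \<noteq> {}" using B(1) by auto
    then have "card B \<ge> 1" using fB by (simp add: Suc_le_eq card_gt_0_iff)
    moreover have "card ?T \<ge> 1"
    proof -
      have "((\<lambda>_. 0), (\<lambda>_. 0)) \<in> ?T" using T_mem[of k "\<lambda>_. 0" "\<lambda>_. 0" n m] k zero_grid by auto
      then have "?T \<noteq> {}" by auto
      then show ?thesis using finite_T[of n m k] by (simp add: Suc_le_eq card_gt_0_iff)
    qed
    ultimately show False using le1 cB by linarith
  qed
  then show ?thesis
    using real_vector.linear_inj_on_iff_eq_0[OF linear_psi subspace_V] by blast
qed



definition Aset :: "nat \<Rightarrow> nat \<Rightarrow> (nat \<Rightarrow> nat) set" where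
  "Aset n e = {j. (\<forall>i\<ge>n. j i = 0) \<and> (\<Sum>i<n. j i) \<le> e}"

lemma sum_upd_out': "(\<Sum>i<n. (f(n := x)) i) = (\<Sum>i<(n::nat). (f i :: nat))"
  by (rule sum.cong[OF refl]) simp

lemma finite_Aset: "finite (Aset n e)"
proof -
  have "Aset n e \<subseteq> midx n (Suc e)" by (auto simp: Aset_def midx_def)
  then show ?thesis using finite_midx finite_subset by blast
qed

lemma Aset_Suc: "Aset (Suc n) e = (\<Union>t\<in>{..e}. (\<lambda>h. h(n := t)) ` Aset n (e - t))"
proof
  show "Aset (Suc n) e \<subseteq> (\<Union>t\<in>{..e}. (\<lambda>h. h(n := t)) ` Aset n (e - t))"
  proof
    fix j assume j: "j \<in> Aset (Suc n) e"
    have s: "(\<Sum>i<n. j i) + j n \<le> e" using j by (simp add: Aset_def)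
    have "j(n := 0) \<in> Aset n (e - j n)"
      using j s by (auto simp: Aset_def sum_upd_out')
    moreover have "j = (j(n := 0))(n := j n)" by simp
    ultimately show "j \<in> (\<Union>t\<in>{..e}. (\<lambda>h. h(n := t)) ` Aset n (e - t))"
      using s by (intro UN_I[of "j n"] image_eqI[where x="j(n := 0)"]) auto
  qed
next
  show "(\<Union>t\<in>{..e}. (\<lambda>h. h(n := t)) ` Aset n (e - t)) \<subseteq> Aset (Suc n) e"
  proof
    fix x assume "x \<in> (\<Union>t\<in>{..e}. (\<lambda>h. h(n := t)) ` Aset n (e - t))"
    then obtain t h where t: "t \<in> {..e}" and h: "h \<in> Aset n (e - t)" and x: "x = h(n := t)"
      by blast
    have "(\<Sum>i<Suc n. (h(n := t)) i) = (\<Sum>i<n. h i) + t" by (simp add: sum_upd_out')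
    then show "x \<in> Aset (Suc n) e"
      using t h x by (auto simp: Aset_def)
  qed
qed

lemma choose_sym_aux: "(n + u) choose n = (n + u) choose (u::nat)"
  using binomial_symmetric[of n "n + u"] by simp

lemma card_Aset: "card (Aset n e) = (n + e) choose n"
proof (induction n arbitrary: e)
  case 0
  have "Aset 0 e = {\<lambda>_. 0}" by (auto simp: Aset_def)
  then show ?case by simp
next
  case (Suc n)
  have "card (Aset (Suc n) e) = (\<Sum>t\<in>{..e}. card ((\<lambda>h. h(n := t)) ` Aset n (e - t)))"
    unfolding Aset_Suc
  proof (rule card_UN_disjoint)
    show "\<forall>i\<in>{..e}. \<forall>j\<in>{..e}. i \<noteq> j \<longrightarrow>
       (\<lambda>h. h(n := i)) ` Aset n (e - i) \<inter> (\<lambda>h. h(n := j)) ` Aset n (e - j) = {}"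
    proof (intro ballI impI equals0I)
      fix i j x assume ij: "i \<noteq> j" and
        x: "x \<in> (\<lambda>h. h(n := i)) ` Aset n (e - i) \<inter> (\<lambda>h. h(n := j)) ` Aset n (e - j)"
      then obtain h h' where e1: "x = h(n := i)" and e2: "x = h'(n := j)" by blast
      have "x n = i" using e1 by simp
      moreover have "x n = j" using e2 by simp
      ultimately have "i = j" by simp
      with ij show False by simp
    qed
  qed (auto intro: finite_Aset)
  also have "\<dots> = (\<Sum>t\<in>{..e}. (n + (e - t)) choose n)"
  proof (rule sum.cong[OF refl])
    fix t
    have "inj_on (\<lambda>h. h(n := t)) (Aset n (e - t))"
    proof (rule inj_onI)
      fix x y assume xy: "x \<in> Aset n (e - t)" "y \<in> Aset n (e - t)" and eq: "x(n := t) = y(n := t)"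
      show "x = y"
      proof
        fix i show "x i = y i"
        proof (cases "i = n")
          case True
          then show ?thesis using xy by (simp add: Aset_def)
        next
          case False
          then show ?thesis using fun_cong[OF eq, of i] by simp
        qed
      qed
    qed
    then show "card ((\<lambda>h. h(n := t)) ` Aset n (e - t)) = (n + (e - t)) choose n"
      using Suc.IH by (simp add: card_image)
  qed
  also have "\<dots> = (\<Sum>u\<in>{..e}. (n + u) choose n)"
    by (rule sum.reindex_bij_witness[where i = "\<lambda>u. e - u" and j = "\<lambda>t. e - t"]) auto
  also have "\<dots> = (\<Sum>u\<le>e. (n + u) choose u)"
    by (intro sum.cong refl) (rule choose_sym_aux)
  also have "\<dots> = Suc (n + e) choose e" by (rule sum_choose_lower)
  also have "\<dots> = (Suc n + e) choose Suc n"
    using binomial_symmetric[of e "Suc (n + e)"] by simp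
  finally show ?case .
qed

lemma card_midx: "d \<ge> 1 \<Longrightarrow> card (midx n d) = (n + d - 1) choose n"
proof -
  assume d: "d \<ge> 1"
  have "midx n d = Aset n (d - 1)" using d by (auto simp: midx_def Aset_def)
  then show ?thesis using card_Aset[of n "d - 1"] d by simp
qed

lemma card_grid: "card (grid_pts n m) = (m + 1) ^ n"
proof -
  have "grid_pts n m = boxs n (\<lambda>_. {..m})" by (auto simp: grid_pts_def boxs_def)
  then show ?thesis using card_boxs[of n "\<lambda>_. {..m}"] by simp
qed

lemma card_T:
  assumes k: "k \<ge> 2"
  shows "card (psi_index n m k) = bigN n m k"
proof -
  let ?A = "(grid_pts n m - {\<lambda>_::nat. 0::nat}) \<times> midx n k"
  let ?B = "{\<lambda>_::nat. 0::nat} \<times> midx n (k - 1)"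
  have T: "psi_index n m k = ?A \<union> ?B" by (auto simp: psi_index_def)
  have "card (psi_index n m k) = card ?A + card ?B"
    unfolding T by (rule card_Un_disjoint) (use finite_grid[of n m] finite_midx[of n] in auto)
  also have "card ?A = ((m + 1) ^ n - 1) * card (midx n k)"
    using card_grid[of n m] zero_grid[of n m] finite_grid[of n m] by (simp add: card_cartesian_product)
  also have "card ?B = card (midx n (k - 1))" by (simp add: card_cartesian_product)
  finally show ?thesis
    using card_midx[of k n] card_midx[of "k - 1" n] k by (simp add: bigN_def Mk_def)
qed


theorem lemma3p3:
  fixes n m k :: nat
  assumes "m \<ge> 1" and "n \<ge> 1" and "k \<ge> 2"
  shows "card (psi_index n m k) = bigN n m k
    \<and> (\<forall>c\<in>reduced_space n m k. \<forall>d\<in>reduced_space n m k. \<forall>a b :: real.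
          psi n m k (\<lambda>\<alpha>. a * c \<alpha> + b * d \<alpha>) = (\<lambda>p. a * psi n m k c p + b * psi n m k d p))
    \<and> bij_betw (psi n m k) (reduced_space n m k)
        {f. \<forall>p. p \<notin> psi_index n m k \<longrightarrow> f p = 0}"
proof (intro conjI ballI allI)
  show "card (psi_index n m k) = bigN n m k" by (rule card_T[OF assms(3)])
next
  fix c d a b
  show "psi n m k (\<lambda>\<alpha>. a * c \<alpha> + b * d \<alpha>) = (\<lambda>p. a * psi n m k c p + b * psi n m k d p)"
    by (rule psi_lin)
next
  have "psi n m k ` reduced_space n m k \<subseteq> {f. \<forall>p. p \<notin> psi_index n m k \<longrightarrow> f p = 0}"
    by (auto simp: psi_out)
  then have "psi n m k ` reduced_space n m k = {f. \<forall>p. p \<notin> psi_index n m k \<longrightarrow> f p = 0}"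
    using surj_psi[OF assms(3), of n m] by blast
  then show "bij_betw (psi n m k) (reduced_space n m k) {f. \<forall>p. p \<notin> psi_index n m k \<longrightarrow> f p = 0}"
    using inj_psi[OF assms(3), of n m] by (simp add: bij_betw_def)
qed

end
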